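(* Let $K$ be a number field with ring of integers $R$, let $0\ne a\in R$, and let $D$ be either $R[1/a]\{t\}$ or $R[1/a][[t]]$. Then the localization of $D$ at the multiplicative set $R\{t\}\setminus\{0\}$ is a field; equivalently, for every $g\in D$ there exists $0\ne h\in D$ with $gh\in R\{t\}$.
   Context: For $x\in K$ put $\|x\|=\max_{\sigma\in\operatorname{Hom}(K,\mathbb{C})}|\sigma(x)|$, and for a subring $S\subseteq K$ let $S\{t\}=\{\sum_{n\ge0}a_nt^n\in S[[t]]:\limsup_n\|a_n\|^{1/n}\le1\}$. All rings are viewed inside $K[[t]]$. *)

theory Defs
  imports "HOL-Analysis.Analysis" "HOL-Computational_Algebra.Computational_Algebra"
begin

text \<open>A number field, realised (without loss of generality) as a subfield of the
complex numbers that is finite-dimensional over the rationals.\<close>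
definition number_field :: "complex set \<Rightarrow> bool" where
  "number_field K \<longleftrightarrow>
     0 \<in> K \<and> 1 \<in> K \<and>
     (\<forall>x\<in>K. \<forall>y\<in>K. x + y \<in> K \<and> x * y \<in> K \<and> - x \<in> K) \<and>
     (\<forall>x\<in>K. x \<noteq> 0 \<longrightarrow> inverse x \<in> K) \<and>
     (\<exists>B. finite B \<and> B \<subseteq> K \<and>
        (\<forall>x\<in>K. \<exists>c :: complex \<Rightarrow> rat. x = (\<Sum>b\<in>B. of_rat (c b) * b)))"

text \<open>Hom(K, C): ring homomorphisms from K into C, represented extensionally
(value 0 outside K) so that they form a finite set.\<close>
definition embeddings :: "complex set \<Rightarrow> (complex \<Rightarrow> complex) set" where
  "embeddings K = {\<sigma>.
     (\<forall>x\<in>K. \<forall>y\<in>K. \<sigma> (x + y) = \<sigma> x + \<sigma> y \<and> \<sigma> (x * y) = \<sigma> x * \<sigma> y) \<and>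
     \<sigma> 1 = 1 \<and> (\<forall>x. x \<notin> K \<longrightarrow> \<sigma> x = 0)}"

definition house :: "complex set \<Rightarrow> complex \<Rightarrow> real" where
  "house K x = Max ((\<lambda>\<sigma>. cmod (\<sigma> x)) ` embeddings K)"

definition ring_of_integers :: "complex set \<Rightarrow> complex set" where
  "ring_of_integers K = {x \<in> K. algebraic_int x}"

definition invert_elem :: "complex set \<Rightarrow> complex \<Rightarrow> complex set" where
  "invert_elem R a = {r / a ^ k | r k. r \<in> R}"

definition fps_over :: "complex set \<Rightarrow> complex fps set" where
  "fps_over S = {f. \<forall>n. fps_nth f n \<in> S}"

definition conv_fps :: "complex set \<Rightarrow> complex set \<Rightarrow> complex fps set" where
  "conv_fps K S = {f \<in> fps_over S.
      limsup (\<lambda>n. ereal (root n (house K (fps_nth f n)))) \<le> 1}"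

end

theory Submission
  imports Defs "Jordan_Normal_Form.Char_Poly"
begin

lemma alg_int_crit:
  fixes z :: complex and F :: "complex set"
  assumes fin: "finite F" and nz: "\<exists>f\<in>F. f \<noteq> 0"
    and cl: "\<forall>f\<in>F. \<exists>c::complex\<Rightarrow>int. z * f = (\<Sum>w\<in>F. of_int (c w) * w)"
  shows "algebraic_int z"
proof -
  define n where "n = card F"
  obtain e where e: "bij_betw e {0..<n} F" using ex_bij_betw_nat_finite[OF fin] n_def by blast
  define c where "c = (\<lambda>f. SOME c::complex\<Rightarrow>int. z * f = (\<Sum>w\<in>F. of_int (c w) * w))"
  have c: "z * f = (\<Sum>w\<in>F. of_int (c f w) * w)" if "f \<in> F" for f
    unfolding c_def using someI_ex[OF cl[rule_format, OF that]] .
  define Ci where "Ci = mat n n (\<lambda>(i,j). c (e i) (e j))"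
  define A :: "complex mat" where "A = map_mat of_int Ci"
  define v where "v = vec n e"
  have Ci: "Ci \<in> carrier_mat n n" by (simp add: Ci_def)
  have A: "A \<in> carrier_mat n n" by (simp add: A_def Ci_def)
  have "A *\<^sub>v v = z \<cdot>\<^sub>v v"
  proof (rule eq_vecI)
    fix i assume "i < dim_vec (z \<cdot>\<^sub>v v)"
    hence i: "i < n" by (simp add: v_def)
    have "(A *\<^sub>v v) $ i = (\<Sum>j\<in>{0..<n}. of_int (c (e i) (e j)) * e j)"
      using i by (simp add: A_def Ci_def v_def scalar_prod_def)
    also have "\<dots> = (\<Sum>w\<in>F. of_int (c (e i) w) * w)"
      using sum.reindex_bij_betw[OF e, of "\<lambda>w. of_int (c (e i) w) * w"] by simp
    also have "\<dots> = z * e i" using c[of "e i"] e i by (auto simp: bij_betw_def)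
    finally show "(A *\<^sub>v v) $ i = (z \<cdot>\<^sub>v v) $ i" using i by (simp add: v_def)
  qed (simp add: A_def Ci_def v_def)
  moreover have "v \<noteq> 0\<^sub>v n"
  proof -
    obtain f where f: "f \<in> F" "f \<noteq> 0" using nz by blast
    then obtain i where i: "i < n" "e i = f" using e by (auto simp: bij_betw_def)
    hence "v $ i \<noteq> 0\<^sub>v n $ i" using f by (simp add: v_def)
    thus ?thesis by metis
  qed
  ultimately have "eigenvector A v z" using A by (simp add: eigenvector_def v_def)
  hence "poly (char_poly A) z = 0" using eigenvalue_root_char_poly[OF A] eigenvalue_def by blast
  moreover have "char_poly A = map_poly of_int (char_poly Ci)"
    unfolding A_def by (rule of_int_hom.char_poly_hom[OF Ci])
  moreover have "lead_coeff (char_poly Ci) = 1" using degree_monic_char_poly[OF Ci] by simp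
  ultimately show ?thesis unfolding algebraic_int_altdef_ipoly by metis
qed

definition Zspan :: "complex set \<Rightarrow> complex set" where
  "Zspan F = {u. \<exists>c. u = (\<Sum>w\<in>F. of_int (c w) * w)}"

lemma Zspan_0: "0 \<in> Zspan F"
  unfolding Zspan_def by (rule CollectI, rule exI[of _ "\<lambda>_. 0"]) simp

lemma Zspan_add: "u \<in> Zspan F \<Longrightarrow> v \<in> Zspan F \<Longrightarrow> u + v \<in> Zspan F"
proof -
  assume "u \<in> Zspan F" "v \<in> Zspan F"
  then obtain c1 c2 where "u = (\<Sum>w\<in>F. of_int (c1 w) * w)" "v = (\<Sum>w\<in>F. of_int (c2 w) * w)"
    by (auto simp: Zspan_def)
  hence "u + v = (\<Sum>w\<in>F. of_int (c1 w + c2 w) * w)" by (simp add: sum.distrib distrib_right)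
  thus ?thesis unfolding Zspan_def by (intro CollectI exI[of _ "\<lambda>w. c1 w + c2 w"])
qed

lemma Zspan_smult: "u \<in> Zspan F \<Longrightarrow> of_int k * u \<in> Zspan F"
proof -
  assume "u \<in> Zspan F"
  then obtain c1 where "u = (\<Sum>w\<in>F. of_int (c1 w) * w)" by (auto simp: Zspan_def)
  hence "of_int k * u = (\<Sum>w\<in>F. of_int (k * c1 w) * w)" by (simp add: sum_distrib_left mult.assoc)
  thus ?thesis unfolding Zspan_def by (intro CollectI exI[of _ "\<lambda>w. k * c1 w"])
qed

lemma Zspan_sum: "finite I \<Longrightarrow> (\<And>i. i \<in> I \<Longrightarrow> u i \<in> Zspan F) \<Longrightarrow> (\<Sum>i\<in>I. u i) \<in> Zspan F"
  by (induction I rule: finite_induct) (auto intro: Zspan_add Zspan_0)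

lemma Zspan_base: "finite F \<Longrightarrow> f \<in> F \<Longrightarrow> f \<in> Zspan F"
  unfolding Zspan_def
proof (rule CollectI, rule exI[of _ "\<lambda>w. if w = f then 1 else 0"])
  assume "finite F" "f \<in> F"
  have "(\<Sum>w\<in>F. of_int (if w = f then 1 else 0) * w) = (\<Sum>w\<in>F. if w = f then w else 0)"
    by (rule sum.cong) auto
  also have "\<dots> = f" using \<open>finite F\<close> \<open>f \<in> F\<close> by (simp add: sum.delta)
  finally show "f = (\<Sum>w\<in>F. of_int (if w = f then 1 else 0) * w)" by simp
qed

lemma Zspan_mult_closed:
  assumes "finite F" "\<forall>f\<in>F. x * f \<in> Zspan F" "u \<in> Zspan F"
  shows "x * u \<in> Zspan F"
proof -
  from assms(3) obtain c where u: "u = (\<Sum>w\<in>F. of_int (c w) * w)" by (auto simp: Zspan_def)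
  have "x * u = (\<Sum>w\<in>F. of_int (c w) * (x * w))" by (simp add: u sum_distrib_left mult_ac)
  also have "\<dots> \<in> Zspan F" using assms by (intro Zspan_sum Zspan_smult) auto
  finally show ?thesis .
qed

lemma alg_int_crit2:
  assumes "finite F" "\<exists>f\<in>F. f \<noteq> 0" "\<forall>f\<in>F. z * f \<in> Zspan F"
  shows "algebraic_int z"
  using assms by (intro alg_int_crit) (auto simp: Zspan_def)

lemma monic_root_expand:
  fixes x :: complex and p :: "int poly"
  assumes "lead_coeff p = 1" "poly (map_poly of_int p) x = 0"
  shows "x ^ degree p = - (\<Sum>l<degree p. of_int (coeff p l) * x ^ l)"
proof -
  have "0 = (\<Sum>l\<le>degree p. of_int (coeff p l) * x ^ l)"
    using assms(2) by (simp add: poly_altdef degree_map_poly coeff_map_poly)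
  also have "\<dots> = (\<Sum>l<degree p. of_int (coeff p l) * x ^ l) + x ^ degree p"
    using assms(1) by (simp add: lessThan_Suc_atMost[symmetric])
  finally show ?thesis by (simp add: eq_neg_iff_add_eq_0 add.commute)
qed

lemma monic_deg_pos:
  fixes x :: complex and p :: "int poly"
  assumes "lead_coeff p = 1" "poly (map_poly of_int p) x = 0"
  shows "degree p > 0"
proof (rule ccontr)
  assume "\<not> degree p > 0"
  hence "degree p = 0" by simp
  then obtain c where "p = [:c:]" by (rule degree_eq_zeroE)
  hence "p = [:1:]" using assms(1) by simp
  thus False using assms(2) by simp
qed

lemma pow_reduce:
  fixes x :: complex and p :: "int poly"
  assumes "lead_coeff p = 1" "poly (map_poly of_int p) x = 0"
    and "\<And>i. i < degree p \<Longrightarrow> Q (x ^ i)"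
    and "\<And>u v. Q u \<Longrightarrow> Q v \<Longrightarrow> Q (u + v)" "\<And>u k. Q u \<Longrightarrow> Q (of_int k * u)" "Q 0"
  shows "Q (x ^ i)"
proof (induction i rule: less_induct)
  case (less i)
  show ?case
  proof (cases "i < degree p")
    case True thus ?thesis using assms(3) by blast
  next
    case False
    define d where "d = degree p"
    have "x ^ i = x ^ (i - d) * x ^ d" using False by (simp add: d_def flip: power_add)
    also have "\<dots> = - (\<Sum>l<d. of_int (coeff p l) * x ^ (i - d + l))"
      using monic_root_expand[OF assms(1,2)]
      by (simp add: d_def sum_distrib_left power_add mult_ac)
    also have "\<dots> = (\<Sum>l<d. of_int (- coeff p l) * x ^ (i - d + l))"
      by (simp add: sum_negf)
    also have "Q \<dots>"
    proof -
      have "d > 0" using monic_deg_pos[OF assms(1,2)] by (simp add: d_def)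
      have fin: "Q (\<Sum>l\<in>L. of_int (- coeff p l) * x ^ (i - d + l))" if "L \<subseteq> {..<d}" "finite L" for L
        using that(2,1)
      proof (induction L rule: finite_induct)
        case empty thus ?case using assms(6) by simp
      next
        case (insert l L)
        have "i - d + l < i" using insert(4) False \<open>d > 0\<close> by (auto simp: d_def)
        hence "Q (x ^ (i - d + l))" using less by blast
        hence "Q (of_int (- coeff p l) * x ^ (i - d + l))" by (rule assms(5))
        moreover have "Q (\<Sum>l\<in>L. of_int (- coeff p l) * x ^ (i - d + l))" using insert by blast
        ultimately show ?case by (simp only: sum.insert[OF insert(1,2)]) (rule assms(4))
      qed
      show ?thesis by (rule fin) auto
    qed
    finally show ?thesis .
  qed
qed

lemma alg_int_add_mult:
  fixes x y :: complex
  assumes "algebraic_int x" "algebraic_int y"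
  shows "algebraic_int (x + y) \<and> algebraic_int (x * y)"
proof -
  obtain p :: "int poly" where p: "poly (map_poly of_int p) x = 0" "lead_coeff p = 1"
    using assms(1) unfolding algebraic_int_altdef_ipoly by blast
  obtain q :: "int poly" where q: "poly (map_poly of_int q) y = 0" "lead_coeff q = 1"
    using assms(2) unfolding algebraic_int_altdef_ipoly by blast
  define d where "d = degree p"
  define e where "e = degree q"
  have d: "d > 0" using monic_deg_pos[OF p(2,1)] d_def by simp
  have e: "e > 0" using monic_deg_pos[OF q(2,1)] e_def by simp
  define F where "F = (\<lambda>(i,j). x ^ i * y ^ j) ` ({..<d} \<times> {..<e})"
  have fin: "finite F" by (simp add: F_def)
  have base: "x ^ i * y ^ j \<in> Zspan F" if "i < d" "j < e" for i j
    using that by (intro Zspan_base fin) (auto simp: F_def)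
  have A: "x ^ i * y ^ j \<in> Zspan F" if "j < e" for i j
  proof -
    have "(\<lambda>u. u * y ^ j \<in> Zspan F) (x ^ i)"
    proof (rule pow_reduce[OF p(2,1)])
      fix k assume "k < degree p" thus "x ^ k * y ^ j \<in> Zspan F" using base that d_def by simp
    next
      fix u v assume "u * y ^ j \<in> Zspan F" "v * y ^ j \<in> Zspan F"
      thus "(u + v) * y ^ j \<in> Zspan F" by (simp add: distrib_right Zspan_add)
    next
      fix u k assume "u * y ^ j \<in> Zspan F"
      thus "(of_int k * u) * y ^ j \<in> Zspan F" using Zspan_smult by (simp add: mult.assoc)
    qed (simp add: Zspan_0)
    thus ?thesis by simp
  qed
  have B: "x ^ i * y ^ j \<in> Zspan F" for i j
  proof -
    have "(\<lambda>u. x ^ i * u \<in> Zspan F) (y ^ j)"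
    proof (rule pow_reduce[OF q(2,1)])
      fix k assume "k < degree q" thus "x ^ i * y ^ k \<in> Zspan F" using A e_def by simp
    next
      fix u v assume "x ^ i * u \<in> Zspan F" "x ^ i * v \<in> Zspan F"
      thus "x ^ i * (u + v) \<in> Zspan F" by (simp add: distrib_left Zspan_add)
    next
      fix u k assume "x ^ i * u \<in> Zspan F"
      thus "x ^ i * (of_int k * u) \<in> Zspan F" using Zspan_smult by (simp add: mult.left_commute)
    qed (simp add: Zspan_0)
    thus ?thesis by simp
  qed
  have X: "x * f \<in> Zspan F" if "f \<in> F" for f
    using that B[of "Suc _"] by (auto simp: F_def mult_ac)
  have Y: "y * f \<in> Zspan F" if "f \<in> F" for f
    using that B[of _ "Suc _"] by (auto simp: F_def mult_ac)
  have nz: "\<exists>f\<in>F. f \<noteq> 0"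
  proof (intro bexI[of _ 1])
    show "1 \<in> F" unfolding F_def using d e by (intro image_eqI[of _ _ "(0,0)"]) auto
  qed simp
  have "algebraic_int (x + y)"
    by (rule alg_int_crit2[OF fin nz]) (auto simp: distrib_right intro!: Zspan_add X Y)
  moreover have "algebraic_int (x * y)"
  proof (rule alg_int_crit2[OF fin nz], intro ballI)
    fix f assume "f \<in> F"
    hence yf: "y * f \<in> Zspan F" by (rule Y)
    have "\<forall>f\<in>F. x * f \<in> Zspan F" using X by blast
    hence "x * (y * f) \<in> Zspan F" using Zspan_mult_closed[OF fin _ yf] by blast
    thus "x * y * f \<in> Zspan F" by (simp add: mult.assoc)
  qed
  ultimately show ?thesis by blast
qed

lemma algebraic_int_add: "algebraic_int (x::complex) \<Longrightarrow> algebraic_int y \<Longrightarrow> algebraic_int (x + y)"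
  using alg_int_add_mult by blast
lemma algebraic_int_mult: "algebraic_int (x::complex) \<Longrightarrow> algebraic_int y \<Longrightarrow> algebraic_int (x * y)"
  using alg_int_add_mult by blast
lemma algebraic_int_diff: "algebraic_int (x::complex) \<Longrightarrow> algebraic_int y \<Longrightarrow> algebraic_int (x - y)"
  using algebraic_int_add[of x "-y"] by simp
lemma algebraic_int_power: "algebraic_int (x::complex) \<Longrightarrow> algebraic_int (x ^ n)"
  by (induction n) (auto intro: algebraic_int_mult)
lemma algebraic_int_sum: "(\<And>i. i \<in> I \<Longrightarrow> algebraic_int (f i :: complex)) \<Longrightarrow> algebraic_int (sum f I)"
  by (induction I rule: infinite_finite_induct) (auto intro: algebraic_int_add)

context fixes K assumes nf: "number_field K"
begin

lemma K0: "0 \<in> K" and K1: "1 \<in> K" using nf by (auto simp: number_field_def)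
lemma Kadd: "x \<in> K \<Longrightarrow> y \<in> K \<Longrightarrow> x + y \<in> K" using nf by (auto simp: number_field_def)
lemma Kmult: "x \<in> K \<Longrightarrow> y \<in> K \<Longrightarrow> x * y \<in> K" using nf by (auto simp: number_field_def)
lemma Kneg: "x \<in> K \<Longrightarrow> - x \<in> K" using nf by (auto simp: number_field_def)
lemma Kinv: "x \<in> K \<Longrightarrow> inverse x \<in> K"
  using nf K0 by (cases "x = 0") (auto simp: number_field_def)
lemma Kdiff: "x \<in> K \<Longrightarrow> y \<in> K \<Longrightarrow> x - y \<in> K" using Kadd[of x "-y"] Kneg by simp
lemma Kdiv: "x \<in> K \<Longrightarrow> y \<in> K \<Longrightarrow> x / y \<in> K" using Kmult Kinv by (simp add: divide_inverse)
lemma Kpow: "x \<in> K \<Longrightarrow> x ^ n \<in> K" by (induction n) (auto intro: K1 Kmult)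
lemma Ksum: "(\<And>i. i \<in> I \<Longrightarrow> f i \<in> K) \<Longrightarrow> sum f I \<in> K"
  by (induction I rule: infinite_finite_induct) (auto intro: K0 Kadd)
lemma Knat: "of_nat n \<in> K" by (induction n) (auto intro: K0 K1 Kadd)
lemma Kint: "of_int n \<in> K"
  by (cases n rule: int_cases) (auto intro: Knat Kneg simp del: of_nat_Suc)
lemma Krat: "of_rat q \<in> K"
proof -
  obtain a b where "q = Rat.Fract a b" "b > 0" by (cases q) auto
  hence "of_rat q = (of_int a / of_int b :: complex)" by (simp add: of_rat_rat)
  thus ?thesis using Kdiv Kint by simp
qed
lemma KRats: "x \<in> \<rat> \<Longrightarrow> x \<in> K" using Krat by (auto elim: Rats_cases)

section \<open>Embeddings\<close>

context fixes \<sigma> assumes sig: "\<sigma> \<in> embeddings K"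
begin
lemma sadd: "x \<in> K \<Longrightarrow> y \<in> K \<Longrightarrow> \<sigma> (x + y) = \<sigma> x + \<sigma> y"
  using sig by (auto simp: embeddings_def)
lemma smult: "x \<in> K \<Longrightarrow> y \<in> K \<Longrightarrow> \<sigma> (x * y) = \<sigma> x * \<sigma> y"
  using sig by (auto simp: embeddings_def)
lemma s1: "\<sigma> 1 = 1" using sig by (auto simp: embeddings_def)
lemma sout: "x \<notin> K \<Longrightarrow> \<sigma> x = 0" using sig by (auto simp: embeddings_def)
lemma s0: "\<sigma> 0 = 0" using sadd[OF K0 K0] by simp
lemma sneg: "x \<in> K \<Longrightarrow> \<sigma> (- x) = - \<sigma> x"
  using sadd[OF _ Kneg, of x x] s0 by (simp add: eq_neg_iff_add_eq_0 add.commute)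
lemma sdiff: "x \<in> K \<Longrightarrow> y \<in> K \<Longrightarrow> \<sigma> (x - y) = \<sigma> x - \<sigma> y"
  using sadd[OF _ Kneg, of x y] sneg[of y] by simp
lemma snat: "\<sigma> (of_nat n) = of_nat n"
  by (induction n) (auto simp: s0 s1 sadd[OF K1 Knat] add.commute)
lemma sint: "\<sigma> (of_int n) = of_int n"
  by (cases n rule: int_cases) (auto simp: snat sneg[OF Knat] simp del: of_nat_Suc)
lemma spow: "x \<in> K \<Longrightarrow> \<sigma> (x ^ n) = \<sigma> x ^ n"
  by (induction n) (auto simp: s1 smult[OF _ Kpow])
lemma sinv: "x \<in> K \<Longrightarrow> x \<noteq> 0 \<Longrightarrow> \<sigma> (inverse x) = inverse (\<sigma> x)"
proof -
  assume x: "x \<in> K" "x \<noteq> 0"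
  have "\<sigma> x * \<sigma> (inverse x) = 1" using smult[OF x(1) Kinv[OF x(1)]] x s1 by simp
  thus ?thesis by (simp add: inverse_unique)
qed
lemma sdiv: "x \<in> K \<Longrightarrow> y \<in> K \<Longrightarrow> y \<noteq> 0 \<Longrightarrow> \<sigma> (x / y) = \<sigma> x / \<sigma> y"
  using smult[OF _ Kinv] sinv by (simp add: divide_inverse)
lemma srat: "\<sigma> (of_rat q) = of_rat q"
proof -
  obtain a b where q: "q = Rat.Fract a b" and b: "b > 0" by (cases q) auto
  hence "of_rat q = (of_int a / of_int b :: complex)" by (simp add: of_rat_rat)
  thus ?thesis using sdiv[OF Kint Kint, of b a] b by (simp add: sint)
qed
lemma sRats: "x \<in> \<rat> \<Longrightarrow> \<sigma> x = x" using srat by (auto elim: Rats_cases)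
lemma ssum: "(\<And>i. i \<in> I \<Longrightarrow> f i \<in> K) \<Longrightarrow> \<sigma> (sum f I) = (\<Sum>i\<in>I. \<sigma> (f i))"
  by (induction I rule: infinite_finite_induct) (auto simp: s0 sadd[OF _ Ksum])
lemma sratmult: "x \<in> K \<Longrightarrow> \<sigma> (of_rat q * x) = of_rat q * \<sigma> x"
  using smult[OF Krat] srat by simp
lemma sintmult: "x \<in> K \<Longrightarrow> \<sigma> (of_int q * x) = of_int q * \<sigma> x"
  using smult[OF Kint] sint by simp
lemma spoly: "x \<in> K \<Longrightarrow> (\<forall>i. coeff p i \<in> \<rat>) \<Longrightarrow> \<sigma> (poly p x) = poly p (\<sigma> x)"
proof -
  assume x: "x \<in> K" and c: "\<forall>i. coeff p i \<in> \<rat>"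
  have "\<sigma> (poly p x) = \<sigma> (\<Sum>i\<le>degree p. coeff p i * x ^ i)" by (simp add: poly_altdef)
  also have "\<dots> = (\<Sum>i\<le>degree p. \<sigma> (coeff p i * x ^ i))"
    using c x by (intro ssum Kmult[OF KRats Kpow]) auto
  also have "\<dots> = (\<Sum>i\<le>degree p. coeff p i * \<sigma> x ^ i)"
    using c x by (intro sum.cong refl) (simp add: smult[OF KRats Kpow] sRats spow)
  finally show ?thesis by (simp add: poly_altdef)
qed
end

lemma id_emb: "(\<lambda>x. if x \<in> K then x else 0) \<in> embeddings K"
  by (auto simp: embeddings_def K1 Kadd Kmult)

end

interpretation Qvs: vector_space "\<lambda>(q::rat) (x::complex). of_rat q * x"
  by unfold_locales (auto simp: distrib_left distrib_right of_rat_add of_rat_mult mult.assoc)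

lemma cmod_of_rat: "cmod (of_rat r) = \<bar>of_rat r :: real\<bar>"
proof -
  obtain a b where "r = Rat.Fract a b" "b > 0" by (cases r) auto
  thus ?thesis by (simp add: of_rat_rat norm_divide)
qed

context fixes K assumes nf: "number_field K"
begin

lemma K_span: obtains B where "finite B" "B \<subseteq> K"
  "\<forall>x\<in>K. \<exists>c :: complex \<Rightarrow> rat. x = (\<Sum>b\<in>B. of_rat (c b) * b)"
  using nf unfolding number_field_def by blast

lemma K_algebraic:
  assumes x: "x \<in> K"
  shows "\<exists>p::complex poly. (\<forall>i. coeff p i \<in> \<rat>) \<and> p \<noteq> 0 \<and> poly p x = 0"
proof -
  obtain B where B: "finite B" "B \<subseteq> K" "\<forall>x\<in>K. \<exists>c :: complex \<Rightarrow> rat. x = (\<Sum>b\<in>B. of_rat (c b) * b)"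
    by (rule K_span)
  define n where "n = card B"
  show ?thesis
  proof (cases "inj_on (\<lambda>i. x ^ i) {..n}")
    case True
    define S where "S = (\<lambda>i. x ^ i) ` {..n}"
    have cardS: "card S = Suc n" using True by (simp add: S_def card_image)
    have finS: "finite S" by (simp add: S_def)
    have "S \<subseteq> Qvs.span B"
    proof
      fix v assume "v \<in> S"
      hence "v \<in> K" using x Kpow[OF nf] by (auto simp: S_def)
      then obtain c where "v = (\<Sum>b\<in>B. of_rat (c b) * b)" using B(3) by blast
      thus "v \<in> Qvs.span B" using Qvs.span_finite[OF B(1)] by auto
    qed
    have "\<not> Qvs.independent S"
    proof
      assume "Qvs.independent S"
      from Qvs.independent_span_bound[OF B(1) this \<open>S \<subseteq> Qvs.span B\<close>] cardS n_def show False by simp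
    qed
    then obtain u where u: "\<exists>v\<in>S. u v \<noteq> 0" "(\<Sum>v\<in>S. of_rat (u v) * v) = 0"
      using Qvs.dependent_finite[OF finS] by auto
    define p where "p = (\<Sum>i\<le>n. monom (of_rat (u (x ^ i)) :: complex) i)"
    have cp: "coeff p j = (if j \<le> n then of_rat (u (x ^ j)) else 0)" for j
      by (simp add: p_def coeff_sum coeff_monom)
    have "poly p x = (\<Sum>i\<le>n. of_rat (u (x ^ i)) * x ^ i)" by (simp add: p_def poly_sum poly_monom)
    also have "\<dots> = (\<Sum>v\<in>S. of_rat (u v) * v)"
      unfolding S_def by (subst sum.reindex[OF True]) simp
    finally have "poly p x = 0" using u(2) by simp
    moreover have "p \<noteq> 0"
    proof
      assume "p = 0"
      from u(1) obtain i where "i \<le> n" "u (x ^ i) \<noteq> 0" by (auto simp: S_def)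
      hence "coeff p i \<noteq> 0" by (simp add: cp)
      thus False using \<open>p = 0\<close> by simp
    qed
    moreover have "\<forall>i. coeff p i \<in> \<rat>" by (simp add: cp)
    ultimately show ?thesis by blast
  next
    case False
    then obtain i j where ij: "i \<noteq> j" "x ^ i = x ^ j" by (auto simp: inj_on_def)
    define p where "p = monom (1::complex) i - monom 1 j"
    have "coeff p i = 1" using ij by (simp add: p_def coeff_monom)
    hence "p \<noteq> 0" by auto
    moreover have "poly p x = 0" using ij by (simp add: p_def poly_monom)
    moreover have "\<forall>k. coeff p k \<in> \<rat>" by (simp add: p_def coeff_monom)
    ultimately show ?thesis by blast
  qed
qed

lemma emb_finite: "finite (embeddings K)"
proof -
  obtain B where B: "finite B" "B \<subseteq> K" "\<forall>x\<in>K. \<exists>c :: complex \<Rightarrow> rat. x = (\<Sum>b\<in>B. of_rat (c b) * b)"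
    by (rule K_span)
  define P where "P = (\<lambda>b. SOME p::complex poly. (\<forall>i. coeff p i \<in> \<rat>) \<and> p \<noteq> 0 \<and> poly p b = 0)"
  have P: "(\<forall>i. coeff (P b) i \<in> \<rat>) \<and> P b \<noteq> 0 \<and> poly (P b) b = 0" if "b \<in> B" for b
  proof -
    have "b \<in> K" using that B(2) by (simp add: subset_iff)
    from K_algebraic[OF this] show ?thesis unfolding P_def by (rule someI_ex)
  qed
  define Z where "Z = (\<lambda>b. {z. poly (P b) z = 0})"
  have finZ: "finite (Z b)" if "b \<in> B" for b unfolding Z_def using P[OF that] by (intro poly_roots_finite) blast
  define cf where "cf = (\<lambda>x. SOME c :: complex \<Rightarrow> rat. x = (\<Sum>b\<in>B. of_rat (c b) * b))"
  have cf: "x = (\<Sum>b\<in>B. of_rat (cf x b) * b)" if "x \<in> K" for x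
  proof -
    have "\<exists>c :: complex \<Rightarrow> rat. x = (\<Sum>b\<in>B. of_rat (c b) * b)" using B(3) that by blast
    thus ?thesis unfolding cf_def by (rule someI_ex)
  qed
  define \<Phi> where "\<Phi> = (\<lambda>v x. if x \<in> K then (\<Sum>b\<in>B. of_rat (cf x b) * v b) else (0::complex))"
  have sub: "embeddings K \<subseteq> \<Phi> ` (PiE B Z)"
  proof
    fix \<sigma> assume sig: "\<sigma> \<in> embeddings K"
    have "restrict \<sigma> B \<in> PiE B Z"
    proof (rule PiE_I)
      fix b assume b: "b \<in> B"
      have "poly (P b) (\<sigma> b) = \<sigma> (poly (P b) b)"
        using spoly[OF nf sig, of b "P b"] P[OF b] B(2) b by (simp add: subset_iff)
      also have "\<dots> = 0" using P[OF b] s0[OF nf sig] by simp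
      finally show "restrict \<sigma> B b \<in> Z b" using b by (simp add: Z_def)
    next
      fix x assume "x \<notin> B" thus "restrict \<sigma> B x = undefined" by simp
    qed
    moreover have "\<sigma> = \<Phi> (restrict \<sigma> B)"
    proof
      fix x show "\<sigma> x = \<Phi> (restrict \<sigma> B) x"
      proof (cases "x \<in> K")
        case True
        have "\<sigma> x = \<sigma> (\<Sum>b\<in>B. of_rat (cf x b) * b)" by (rule arg_cong[OF cf[OF True]])
        also have "\<dots> = (\<Sum>b\<in>B. \<sigma> (of_rat (cf x b) * b))"
          using B(2) by (intro ssum[OF nf sig] Kmult[OF nf Krat[OF nf]]) auto
        also have "\<dots> = (\<Sum>b\<in>B. of_rat (cf x b) * \<sigma> b)"
          using B(2) by (intro sum.cong refl sratmult[OF nf sig]) auto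
        finally have 1: "\<sigma> x = (\<Sum>b\<in>B. of_rat (cf x b) * \<sigma> b)" .
        have 2: "\<Phi> (restrict \<sigma> B) x = (\<Sum>b\<in>B. of_rat (cf x b) * restrict \<sigma> B b)"
          using True unfolding \<Phi>_def by simp
        have 3: "(\<Sum>b\<in>B. of_rat (cf x b) * restrict \<sigma> B b) = (\<Sum>b\<in>B. of_rat (cf x b) * \<sigma> b)"
          by (intro sum.cong refl) simp
        show ?thesis using 1 2 3 by simp
      next
        case False
        thus ?thesis unfolding \<Phi>_def using sout[OF nf sig False] by simp
      qed
    qed
    ultimately show "\<sigma> \<in> \<Phi> ` (PiE B Z)" by blast
  qed
  have "finite (PiE B Z)" using B(1) finZ by (intro finite_PiE) auto
  from finite_surj[OF this sub] show ?thesis .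
qed

lemma emb_ne: "embeddings K \<noteq> {}" using id_emb[OF nf] by blast

lemma house_ge: "\<sigma> \<in> embeddings K \<Longrightarrow> cmod (\<sigma> x) \<le> house K x"
  unfolding house_def using emb_finite by (intro Max_ge) auto

lemma house_le: "(\<And>\<sigma>. \<sigma> \<in> embeddings K \<Longrightarrow> cmod (\<sigma> x) \<le> C) \<Longrightarrow> house K x \<le> C"
  unfolding house_def using emb_finite emb_ne by (subst Max_le_iff) auto

lemma house_nonneg: "0 \<le> house K x"
proof -
  obtain \<sigma> where "\<sigma> \<in> embeddings K" using emb_ne by blast
  from house_ge[OF this, of x] show ?thesis using norm_ge_zero order_trans by blast
qed

lemma int_multiple:
  assumes x: "x \<in> K"
  shows "\<exists>m::int. m > 0 \<and> algebraic_int (of_int m * x)"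
proof -
  obtain p0 where "(\<forall>i. coeff p0 i \<in> \<rat>) \<and> p0 \<noteq> 0 \<and> poly p0 x = 0" using K_algebraic[OF x] by blast
  hence "algebraic x" by (intro algebraicI') auto
  then obtain p :: "int poly" where p: "p \<noteq> 0" "poly (map_poly of_int p) x = 0" by (rule algebraicE')
  define l where "l = lead_coeff p"
  define d where "d = degree p"
  have l: "l \<noteq> 0" using p by (simp add: l_def)
  have eq: "(\<Sum>i\<le>d. of_int (coeff p i) * x ^ i) = 0"
    using p(2) by (simp add: poly_altdef degree_map_poly coeff_map_poly d_def)
  have d: "d > 0"
  proof (rule ccontr)
    assume "\<not> d > 0" hence "d = 0" by simp
    hence "of_int l = (0::complex)" using eq by (simp add: l_def d_def)
    thus False using l by simp
  qed
  have xd: "of_int l * x ^ d = - (\<Sum>i<d. of_int (coeff p i) * x ^ i)"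
    using eq by (simp add: lessThan_Suc_atMost[symmetric] l_def d_def eq_neg_iff_add_eq_0 add.commute)
  define z where "z = of_int l * x"
  define F where "F = (\<lambda>i. z ^ i) ` {..<d}"
  have fin: "finite F" by (simp add: F_def)
  have base: "z ^ i \<in> Zspan F" if "i < d" for i using that by (intro Zspan_base fin) (auto simp: F_def)
  have zd: "z ^ d = (\<Sum>i<d. of_int (- (coeff p i * l ^ (d - 1 - i))) * z ^ i)"
  proof -
    have "z ^ d = of_int l ^ (d - 1) * (of_int l * x ^ d)"
      using d by (simp add: z_def power_mult_distrib mult_ac flip: power_Suc)
    also have "\<dots> = - (\<Sum>i<d. of_int l ^ (d - 1) * (of_int (coeff p i) * x ^ i))"
      by (simp add: xd sum_distrib_left)
    also have "\<dots> = (\<Sum>i<d. of_int (- (coeff p i * l ^ (d - 1 - i))) * z ^ i)"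
    proof -
      have "of_int l ^ (d - 1) * (of_int (coeff p i) * x ^ i) = of_int (coeff p i * l ^ (d - 1 - i)) * z ^ i"
        if "i < d" for i
      proof -
        have "(of_int l :: complex) ^ (d - 1) = of_int l ^ (d - 1 - i) * of_int l ^ i"
          using that by (simp flip: power_add)
        thus ?thesis by (simp add: z_def power_mult_distrib mult_ac)
      qed
      hence "(\<Sum>i<d. of_int l ^ (d - 1) * (of_int (coeff p i) * x ^ i)) =
             (\<Sum>i<d. of_int (coeff p i * l ^ (d - 1 - i)) * z ^ i)" by (intro sum.cong) auto
      thus ?thesis by (simp add: sum_negf)
    qed
    finally show ?thesis .
  qed
  have "algebraic_int z"
  proof (rule alg_int_crit2[OF fin])
    show "\<exists>f\<in>F. f \<noteq> 0" using d by (intro bexI[of _ 1]) (auto simp: F_def image_iff intro!: bexI[of _ 0])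
    show "\<forall>f\<in>F. z * f \<in> Zspan F"
    proof
      fix f assume "f \<in> F"
      then obtain i where i: "i < d" "f = z ^ i" by (auto simp: F_def)
      show "z * f \<in> Zspan F"
      proof (cases "Suc i < d")
        case True thus ?thesis using base[OF True] i by (simp flip: power_Suc)
      next
        case False
        hence "Suc i = d" using i by simp
        hence "z * f = z ^ d" using i by (simp flip: power_Suc)
        also have "\<dots> \<in> Zspan F" unfolding zd by (intro Zspan_sum Zspan_smult base) auto
        finally show ?thesis .
      qed
    qed
  qed
  show ?thesis
  proof (cases "l > 0")
    case True thus ?thesis using \<open>algebraic_int z\<close> by (auto simp: z_def)
  next
    case False
    hence "- l > 0" using l by simp
    moreover have "algebraic_int (of_int (- l) * x)" using \<open>algebraic_int z\<close> by (simp add: z_def)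
    ultimately show ?thesis by blast
  qed
qed

end

context fixes K assumes nf: "number_field K"
begin

lemma Rdef: "x \<in> ring_of_integers K \<longleftrightarrow> x \<in> K \<and> algebraic_int x"
  by (simp add: ring_of_integers_def)
lemma RK: "x \<in> ring_of_integers K \<Longrightarrow> x \<in> K" by (simp add: Rdef)
lemma R0: "0 \<in> ring_of_integers K" by (simp add: Rdef K0[OF nf])
lemma R1: "1 \<in> ring_of_integers K" by (simp add: Rdef K1[OF nf])
lemma Rint: "of_int n \<in> ring_of_integers K" by (simp add: Rdef Kint[OF nf])
lemma Radd: "x \<in> ring_of_integers K \<Longrightarrow> y \<in> ring_of_integers K \<Longrightarrow> x + y \<in> ring_of_integers K"
  by (simp add: Rdef Kadd[OF nf] algebraic_int_add)
lemma Rmult: "x \<in> ring_of_integers K \<Longrightarrow> y \<in> ring_of_integers K \<Longrightarrow> x * y \<in> ring_of_integers K"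
  by (simp add: Rdef Kmult[OF nf] algebraic_int_mult)
lemma Rneg: "x \<in> ring_of_integers K \<Longrightarrow> - x \<in> ring_of_integers K"
  by (simp add: Rdef Kneg[OF nf])
lemma Rdiff: "x \<in> ring_of_integers K \<Longrightarrow> y \<in> ring_of_integers K \<Longrightarrow> x - y \<in> ring_of_integers K"
  using Radd[of x "-y"] Rneg by simp
lemma Rpow: "x \<in> ring_of_integers K \<Longrightarrow> x ^ n \<in> ring_of_integers K"
  by (induction n) (auto intro: R1 Rmult)
lemma Rsum: "(\<And>i. i \<in> I \<Longrightarrow> f i \<in> ring_of_integers K) \<Longrightarrow> sum f I \<in> ring_of_integers K"
  by (induction I rule: infinite_finite_induct) (auto intro: R0 Radd)

context fixes a assumes aR: "a \<in> ring_of_integers K" and a0: "a \<noteq> 0"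
begin

lemma Ra_iff: "x \<in> invert_elem (ring_of_integers K) a \<longleftrightarrow> (\<exists>r k. r \<in> ring_of_integers K \<and> x = r / a ^ k)"
  by (auto simp: invert_elem_def)

lemma RRa: "x \<in> ring_of_integers K \<Longrightarrow> x \<in> invert_elem (ring_of_integers K) a"
  unfolding Ra_iff by (rule exI[of _ x], rule exI[of _ 0]) simp

lemma RaK: "x \<in> invert_elem (ring_of_integers K) a \<Longrightarrow> x \<in> K"
  unfolding Ra_iff using Kdiv[OF nf] RK Kpow[OF nf] aR by auto

lemma Ra_add: "x \<in> invert_elem (ring_of_integers K) a \<Longrightarrow> y \<in> invert_elem (ring_of_integers K) a
   \<Longrightarrow> x + y \<in> invert_elem (ring_of_integers K) a"
proof -
  assume "x \<in> invert_elem (ring_of_integers K) a" "y \<in> invert_elem (ring_of_integers K) a"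
  then obtain r1 k1 r2 k2 where r: "r1 \<in> ring_of_integers K" "r2 \<in> ring_of_integers K"
    "x = r1 / a ^ k1" "y = r2 / a ^ k2" unfolding Ra_iff by blast
  have "x + y = (r1 * a ^ k2 + r2 * a ^ k1) / a ^ (k1 + k2)"
    using a0 by (simp add: r field_simps power_add)
  moreover have "r1 * a ^ k2 + r2 * a ^ k1 \<in> ring_of_integers K"
    using r aR by (intro Radd Rmult Rpow)
  ultimately show ?thesis unfolding Ra_iff by blast
qed

lemma Ra_mult: "x \<in> invert_elem (ring_of_integers K) a \<Longrightarrow> y \<in> invert_elem (ring_of_integers K) a
   \<Longrightarrow> x * y \<in> invert_elem (ring_of_integers K) a"
proof -
  assume "x \<in> invert_elem (ring_of_integers K) a" "y \<in> invert_elem (ring_of_integers K) a"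
  then obtain r1 k1 r2 k2 where r: "r1 \<in> ring_of_integers K" "r2 \<in> ring_of_integers K"
    "x = r1 / a ^ k1" "y = r2 / a ^ k2" unfolding Ra_iff by blast
  have "x * y = (r1 * r2) / a ^ (k1 + k2)"
    using a0 by (simp add: r field_simps power_add)
  moreover have "r1 * r2 \<in> ring_of_integers K" using r by (intro Rmult)
  ultimately show ?thesis unfolding Ra_iff by blast
qed

lemma Ra_neg: "x \<in> invert_elem (ring_of_integers K) a \<Longrightarrow> - x \<in> invert_elem (ring_of_integers K) a"
  using Ra_mult[OF RRa[OF Rint[of "-1"]]] by simp

lemma Ra_diff: "x \<in> invert_elem (ring_of_integers K) a \<Longrightarrow> y \<in> invert_elem (ring_of_integers K) a
   \<Longrightarrow> x - y \<in> invert_elem (ring_of_integers K) a"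
  using Ra_add[of x "-y"] Ra_neg by simp

lemma Ra_sum: "(\<And>i. i \<in> I \<Longrightarrow> f i \<in> invert_elem (ring_of_integers K) a)
   \<Longrightarrow> sum f I \<in> invert_elem (ring_of_integers K) a"
  by (induction I rule: infinite_finite_induct) (auto intro: RRa[OF R0] Ra_add)

end

lemma approx:
  shows "\<exists>CB\<ge>0. \<forall>v\<in>K. \<forall>N::int. N > 0 \<longrightarrow>
     (\<exists>z\<in>ring_of_integers K. \<forall>\<sigma>\<in>embeddings K. cmod (\<sigma> (v - of_int N * z)) \<le> of_int N * CB)"
proof -
  obtain B where B: "finite B" "B \<subseteq> K" "\<forall>x\<in>K. \<exists>c :: complex \<Rightarrow> rat. x = (\<Sum>b\<in>B. of_rat (c b) * b)"
    by (rule K_span[OF nf])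
  define m where "m = (\<lambda>b::complex. SOME k::int. k > 0 \<and> algebraic_int (of_int k * b))"
  have m: "m b > 0 \<and> algebraic_int (of_int (m b) * b)" if "b \<in> B" for b :: complex
  proof -
    have "b \<in> K" using that B(2) by (simp add: subset_iff)
    from int_multiple[OF nf this] show ?thesis unfolding m_def by (rule someI_ex)
  qed
  define \<beta> where "\<beta> = (\<lambda>b. of_int (m b) * b)"
  have \<beta>R: "\<beta> b \<in> ring_of_integers K" if "b \<in> B" for b
    using m[OF that] B(2) that by (auto simp: Rdef \<beta>_def intro!: Kmult[OF nf] Kint[OF nf])
  define CB where "CB = (\<Sum>b\<in>B. house K (\<beta> b))"
  have "CB \<ge> 0" unfolding CB_def by (intro sum_nonneg house_nonneg[OF nf])
  moreover have "\<exists>z\<in>ring_of_integers K. \<forall>\<sigma>\<in>embeddings K. cmod (\<sigma> (v - of_int N * z)) \<le> of_int N * CB"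
    if v: "v \<in> K" and N: "N > 0" for v N
  proof -
    obtain c where c: "v = (\<Sum>b\<in>B. of_rat (c b) * b)" using B(3) v by blast
    define t where "t = (\<lambda>b. c b / of_int (m b))"
    have tb: "of_rat (t b) * \<beta> b = of_rat (c b) * b" if "b \<in> B" for b
    proof -
      have "(of_int (m b) :: complex) \<noteq> 0" using m[OF that] by simp
      thus ?thesis by (simp add: t_def \<beta>_def of_rat_divide)
    qed
    have v': "v = (\<Sum>b\<in>B. of_rat (t b) * \<beta> b)"
      unfolding c using tb by (intro sum.cong refl) auto
    define f where "f = (\<lambda>b. \<lfloor>t b / of_int N\<rfloor>)"
    define z where "z = (\<Sum>b\<in>B. of_int (f b) * \<beta> b)"
    have zR: "z \<in> ring_of_integers K" unfolding z_def by (intro Rsum Rmult Rint \<beta>R)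
    define r where "r = (\<lambda>b. t b - of_int N * of_int (f b))"
    have r: "0 \<le> r b \<and> r b \<le> of_int N" for b
    proof -
      have "of_int (f b) \<le> t b / of_int N \<and> t b / of_int N < of_int (f b) + 1"
        unfolding f_def using floor_correct by auto
      thus ?thesis using N by (auto simp: r_def field_simps)
    qed
    have eq: "v - of_int N * z = (\<Sum>b\<in>B. of_rat (r b) * \<beta> b)"
      by (simp add: v' z_def r_def sum_distrib_left sum_subtractf of_rat_diff of_rat_mult
          algebra_simps)
    have "cmod (\<sigma> (v - of_int N * z)) \<le> of_int N * CB" if sig: "\<sigma> \<in> embeddings K" for \<sigma>
    proof -
      have "\<sigma> (v - of_int N * z) = (\<Sum>b\<in>B. \<sigma> (of_rat (r b) * \<beta> b))"
        unfolding eq using \<beta>R by (intro ssum[OF nf sig] Kmult[OF nf Krat[OF nf]] RK) auto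
      also have "\<dots> = (\<Sum>b\<in>B. of_rat (r b) * \<sigma> (\<beta> b))"
        using \<beta>R by (intro sum.cong refl sratmult[OF nf sig] RK) auto
      finally have "cmod (\<sigma> (v - of_int N * z)) \<le> (\<Sum>b\<in>B. cmod (of_rat (r b) * \<sigma> (\<beta> b)))"
        by (simp add: norm_sum)
      also have "\<dots> \<le> (\<Sum>b\<in>B. of_int N * house K (\<beta> b))"
      proof (intro sum_mono)
        fix b assume "b \<in> B"
        have "cmod (of_rat (r b) * \<sigma> (\<beta> b)) = of_rat (r b) * cmod (\<sigma> (\<beta> b))"
          using r[of b] by (simp add: norm_mult cmod_of_rat)
        also have "\<dots> \<le> of_int N * house K (\<beta> b)"
        proof (intro mult_mono)
          show "(of_rat (r b) :: real) \<le> of_int N"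
            using r[of b] by (metis of_rat_less_eq of_rat_of_int_eq)
        qed (use house_ge[OF nf sig] N in auto)
        finally show "cmod (of_rat (r b) * \<sigma> (\<beta> b)) \<le> of_int N * house K (\<beta> b)" .
      qed
      also have "\<dots> = of_int N * CB" by (simp add: CB_def sum_distrib_left)
      finally show ?thesis .
    qed
    thus ?thesis using zR by blast
  qed
  ultimately show ?thesis by blast
qed

lemma int_in_ideal:
  assumes r: "r \<in> ring_of_integers K" "r \<noteq> 0"
  shows "\<exists>N::int. N > 0 \<and> (\<exists>y\<in>ring_of_integers K. of_int N = r * y)"
proof -
  obtain p :: "int poly" where p: "poly (map_poly of_int p) r = 0" "lead_coeff p = 1"
    using r unfolding Rdef algebraic_int_altdef_ipoly by blast
  define D where "D = degree p"
  define k where "k = (LEAST i. coeff p i \<noteq> 0)"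
  have pk: "coeff p k \<noteq> 0" unfolding k_def by (rule LeastI[of _ D]) (use p in \<open>simp add: D_def\<close>)
  have kD: "k \<le> D" unfolding k_def by (rule Least_le) (use p in \<open>simp add: D_def\<close>)
  have lt: "coeff p i = 0" if "i < k" for i using not_less_Least[OF that[unfolded k_def]] by simp
  define Y where "Y = (\<Sum>i\<in>{k<..D}. of_int (coeff p i) * r ^ (i - k - 1))"
  have "0 = (\<Sum>i\<le>D. of_int (coeff p i) * r ^ i)"
    using p(1) by (simp add: poly_altdef degree_map_poly coeff_map_poly D_def)
  also have "{..D} = {..<k} \<union> ({k} \<union> {k<..D})" using kD by auto
  also have "(\<Sum>i\<in>{..<k} \<union> ({k} \<union> {k<..D}). of_int (coeff p i) * r ^ i) =
      (\<Sum>i\<in>{..<k}. of_int (coeff p i) * r ^ i) + (of_int (coeff p k) * r ^ k +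
       (\<Sum>i\<in>{k<..D}. of_int (coeff p i) * r ^ i))"
    by (subst sum.union_disjoint, simp, simp, force, subst sum.union_disjoint) auto
  also have "(\<Sum>i\<in>{..<k}. of_int (coeff p i) * r ^ i) = 0" using lt by simp
  also have "(\<Sum>i\<in>{k<..D}. of_int (coeff p i) * r ^ i) = r ^ k * (r * Y)"
    unfolding Y_def sum_distrib_left
    by (intro sum.cong refl) (auto simp: mult_ac simp flip: power_add power_Suc)
  finally have "r ^ k * (of_int (coeff p k) + r * Y) = 0" by (simp add: algebra_simps)
  hence eq: "of_int (coeff p k) = r * (- Y)" using r(2) by (simp add: eq_neg_iff_add_eq_0)
  have YR: "Y \<in> ring_of_integers K" unfolding Y_def using r(1) by (intro Rsum Rmult Rint Rpow)
  show ?thesis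
  proof (cases "coeff p k > 0")
    case True thus ?thesis using eq YR Rneg by blast
  next
    case False
    hence "- coeff p k > 0" using pk by simp
    moreover have "of_int (- coeff p k) = r * Y" using eq by simp
    ultimately show ?thesis using YR by blast
  qed
qed


lemma periodic:
  assumes aR: "a \<in> ring_of_integers K" and N: "(N::int) > 0"
  shows "\<exists>i p. p > 0 \<and> (\<forall>k. \<exists>y\<in>ring_of_integers K. a ^ i * (1 - a ^ (p * k)) = of_int N * y)"
proof -
  obtain P :: "int poly" where P: "poly (map_poly of_int P) a = 0" "lead_coeff P = 1"
    using aR unfolding Rdef algebraic_int_altdef_ipoly by blast
  define d where "d = degree P"
  have rep: "\<exists>z::nat\<Rightarrow>int. a ^ i = (\<Sum>j<d. of_int (z j) * a ^ j)" for i
  proof -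
    have "(\<lambda>u. \<exists>z::nat\<Rightarrow>int. u = (\<Sum>j<d. of_int (z j) * a ^ j)) (a ^ i)"
    proof (rule pow_reduce[OF P(2,1)])
      fix i assume i: "i < degree P"
      have "(\<Sum>j<d. of_int (if j = i then 1 else 0) * a ^ j) = (\<Sum>j<d. if j = i then a ^ j else 0)"
        by (intro sum.cong) auto
      also have "\<dots> = a ^ i" using i by (simp add: d_def)
      finally show "\<exists>z::nat\<Rightarrow>int. a ^ i = (\<Sum>j<d. of_int (z j) * a ^ j)"
        by (intro exI[of _ "\<lambda>j. if j = i then 1 else 0"]) simp
    next
      fix u v assume "\<exists>z::nat\<Rightarrow>int. u = (\<Sum>j<d. of_int (z j) * a ^ j)" "\<exists>z::nat\<Rightarrow>int. v = (\<Sum>j<d. of_int (z j) * a ^ j)"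
      then obtain z1 z2 :: "nat \<Rightarrow> int" where "u = (\<Sum>j<d. of_int (z1 j) * a ^ j)" "v = (\<Sum>j<d. of_int (z2 j) * a ^ j)"
        by blast
      hence "u + v = (\<Sum>j<d. of_int (z1 j + z2 j) * a ^ j)" by (simp add: sum.distrib distrib_right)
      thus "\<exists>z::nat\<Rightarrow>int. u + v = (\<Sum>j<d. of_int (z j) * a ^ j)" by (intro exI[of _ "\<lambda>j. z1 j + z2 j"])
    next
      fix u k assume "\<exists>z::nat\<Rightarrow>int. u = (\<Sum>j<d. of_int (z j) * a ^ j)"
      then obtain z1 :: "nat \<Rightarrow> int" where "u = (\<Sum>j<d. of_int (z1 j) * a ^ j)" by blast
      hence "of_int k * u = (\<Sum>j<d. of_int (k * z1 j) * a ^ j)" by (simp add: sum_distrib_left mult.assoc)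
      thus "\<exists>z::nat\<Rightarrow>int. of_int k * u = (\<Sum>j<d. of_int (z j) * a ^ j)" by (intro exI[of _ "\<lambda>j. k * z1 j"])
    next
      show "\<exists>z::nat\<Rightarrow>int. 0 = (\<Sum>j<d. of_int (z j) * a ^ j)" by (intro exI[of _ "\<lambda>_. 0"]) simp
    qed
    thus ?thesis by simp
  qed
  define zz where "zz = (\<lambda>i. SOME z::nat\<Rightarrow>int. a ^ i = (\<Sum>j<d. of_int (z j) * a ^ j))"
  have zz: "a ^ i = (\<Sum>j<d. of_int (zz i j) * a ^ j)" for i
    unfolding zz_def by (rule someI_ex[OF rep])
  define \<phi> where "\<phi> = (\<lambda>i. restrict (\<lambda>j. zz i j mod N) {..<d})"
  have "\<phi> i \<in> PiE {..<d} (\<lambda>_. {0..<N})" for i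
    unfolding \<phi>_def using N by (subst restrict_PiE_iff) auto
  hence "range \<phi> \<subseteq> PiE {..<d} (\<lambda>_. {0..<N})" by blast
  moreover have "finite (PiE {..<d} (\<lambda>_. {0..<N}))" by (intro finite_PiE) auto
  ultimately have "finite (range \<phi>)" by (rule finite_subset)
  hence "\<not> inj \<phi>" using finite_imageD infinite_UNIV_nat by blast
  then obtain i1 i2 where i12: "i1 \<noteq> i2" "\<phi> i1 = \<phi> i2" by (auto simp: inj_on_def)
  obtain i i' where ii: "i < i'" "\<phi> i = \<phi> i'"
  proof (cases "i1 < i2")
    case True thus ?thesis using that i12 by blast
  next
    case False thus ?thesis using that[of i2 i1] i12 by simp
  qed
  define w where "w = (\<lambda>j. (zz i j - zz i' j) div N)"
  have w: "N * w j = zz i j - zz i' j" if "j < d" for j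
  proof -
    have "zz i j mod N = zz i' j mod N" using fun_cong[OF ii(2), of j] that by (simp add: \<phi>_def)
    hence "N dvd zz i j - zz i' j" by (simp add: mod_eq_dvd_iff)
    thus ?thesis by (simp add: w_def)
  qed
  define y1 where "y1 = (\<Sum>j<d. of_int (w j) * a ^ j)"
  have y1R: "y1 \<in> ring_of_integers K" unfolding y1_def using aR by (intro Rsum Rmult Rint Rpow)
  define p where "p = i' - i"
  have p: "p > 0" using ii by (simp add: p_def)
  have base: "a ^ i * (1 - a ^ p) = of_int N * y1"
  proof -
    have "a ^ i * (1 - a ^ p) = a ^ i - a ^ i'" using ii by (simp add: p_def algebra_simps flip: power_add)
    also have "\<dots> = (\<Sum>j<d. of_int (zz i j - zz i' j) * a ^ j)"
      by (subst (1 2) zz) (simp add: sum_subtractf algebra_simps)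
    also have "\<dots> = (\<Sum>j<d. of_int N * (of_int (w j) * a ^ j))"
      by (intro sum.cong refl) (simp add: w flip: of_int_mult mult.assoc)
    also have "\<dots> = of_int N * y1" by (simp add: y1_def sum_distrib_left)
    finally show ?thesis .
  qed
  have "\<exists>y\<in>ring_of_integers K. a ^ i * (1 - a ^ (p * k)) = of_int N * y" for k
  proof (induction k)
    case 0 thus ?case using R0 by (intro bexI[of _ 0]) auto
  next
    case (Suc k)
    then obtain y where y: "y \<in> ring_of_integers K" "a ^ i * (1 - a ^ (p * k)) = of_int N * y" by blast
    have "a ^ i * (1 - a ^ (p * Suc k)) = a ^ i * (1 - a ^ (p * k)) + a ^ (p * k) * (a ^ i * (1 - a ^ p))"
      by (simp add: algebra_simps power_add)
    also have "\<dots> = of_int N * (y + a ^ (p * k) * y1)" by (simp only: y(2) base) (simp add: algebra_simps)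
    finally show ?case using y y1R aR by (intro bexI[of _ "y + a ^ (p * k) * y1"]) (auto intro: Radd Rmult Rpow)
  qed
  thus ?thesis using p by blast
qed

lemma main_arith:
  assumes aR: "a \<in> ring_of_integers K" and a0: "a \<noteq> 0"
    and bRa: "b \<in> invert_elem (ring_of_integers K) a" and b0: "b \<noteq> 0"
  shows "\<exists>C0\<ge>0. \<forall>s\<in>invert_elem (ring_of_integers K) a. \<forall>w\<in>K. \<exists>c\<in>ring_of_integers K.
           (c - s) / b \<in> invert_elem (ring_of_integers K) a \<and>
           (\<forall>\<sigma>\<in>embeddings K. cmod (\<sigma> (c - w)) \<le> C0)"
proof -
  obtain rb j where rb: "rb \<in> ring_of_integers K" "b = rb / a ^ j"
    using bRa unfolding Ra_iff[OF aR a0] by blast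
  have rb0: "rb \<noteq> 0" using rb b0 by auto
  obtain N y0 where N: "N > 0" "y0 \<in> ring_of_integers K" "of_int N = rb * y0"
    using int_in_ideal[OF rb(1) rb0] by blast
  obtain i p where p: "p > 0" "\<And>k. \<exists>y\<in>ring_of_integers K. a ^ i * (1 - a ^ (p * k)) = of_int N * y"
    using periodic[OF aR N(1)] by blast
  obtain CB where CB: "CB \<ge> 0" "\<And>v N. v \<in> K \<Longrightarrow> (N::int) > 0 \<Longrightarrow>
     \<exists>z\<in>ring_of_integers K. \<forall>\<sigma>\<in>embeddings K. cmod (\<sigma> (v - of_int N * z)) \<le> of_int N * CB"
    using approx by blast
  have "\<exists>c\<in>ring_of_integers K. (c - s) / b \<in> invert_elem (ring_of_integers K) a \<and>
           (\<forall>\<sigma>\<in>embeddings K. cmod (\<sigma> (c - w)) \<le> of_int N * CB)"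
    if s: "s \<in> invert_elem (ring_of_integers K) a" and w: "w \<in> K" for s w
  proof -
    obtain r k where r: "r \<in> ring_of_integers K" "s = r / a ^ k" using s unfolding Ra_iff[OF aR a0] by blast
    obtain y where y: "y \<in> ring_of_integers K" "a ^ i * (1 - a ^ (p * k)) = of_int N * y" using p(2) by blast
    define c0 where "c0 = r * a ^ (p * k - k)"
    have c0R: "c0 \<in> ring_of_integers K" unfolding c0_def using r aR by (intro Rmult Rpow)
    define x' where "x' = (- r * y) / a ^ (i + k)"
    have x'Ra: "x' \<in> invert_elem (ring_of_integers K) a"
      unfolding Ra_iff[OF aR a0] using r y
      by (intro exI[of _ "- r * y"] exI[of _ "i + k"] conjI) (auto intro: Rmult Rneg simp: x'_def)
    have pk: "a ^ (p * k) = a ^ (p * k - k) * a ^ k"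
    proof -
      have "p * k \<ge> k" using p(1) by simp
      thus ?thesis by (simp flip: power_add)
    qed
    have c0s: "c0 - s = of_int N * x'"
    proof -
      have "of_int N * x' = - r * (of_int N * y) / (a ^ i * a ^ k)"
        by (simp add: x'_def power_add)
      also have "\<dots> = - r * (a ^ i * (1 - a ^ (p * k))) / (a ^ i * a ^ k)" by (simp add: y)
      also have "\<dots> = (r * a ^ (p * k) - r) / a ^ k" using a0 by (simp add: field_simps)
      also have "\<dots> = c0 - s" using a0 by (subst pk) (simp add: c0_def r(2) field_simps)
      finally show ?thesis by simp
    qed
    have vK: "c0 - w \<in> K" by (rule Kdiff[OF nf RK[OF c0R] w])
    obtain z where z: "z \<in> ring_of_integers K"
      "\<forall>\<sigma>\<in>embeddings K. cmod (\<sigma> (c0 - w - of_int N * z)) \<le> of_int N * CB"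
      using CB(2)[OF vK N(1)] by blast
    define c where "c = c0 - of_int N * z"
    have cR: "c \<in> ring_of_integers K" unfolding c_def using c0R z(1) by (intro Rdiff Rmult Rint)
    have "(c - s) / b = y0 * a ^ j * (x' - z)"
    proof -
      have "c - s = rb * y0 * (x' - z)" unfolding c_def using c0s N(3) by (simp add: algebra_simps)
      hence "(c - s) / b = (rb * y0 * (x' - z)) / (rb / a ^ j)" by (simp add: rb(2))
      also have "\<dots> = y0 * a ^ j * (x' - z)" using rb0 a0 by (simp add: field_simps)
      finally show ?thesis .
    qed
    moreover have "y0 * a ^ j * (x' - z) \<in> invert_elem (ring_of_integers K) a"
      using N(2) aR x'Ra z(1)
      by (intro Ra_mult[OF aR a0] Ra_diff[OF aR a0, OF x'Ra] RRa[OF aR a0] Rmult Rpow) auto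
    ultimately have cs: "(c - s) / b \<in> invert_elem (ring_of_integers K) a" by simp
    have cw: "c - w = c0 - w - of_int N * z" by (simp add: c_def)
    have "\<forall>\<sigma>\<in>embeddings K. cmod (\<sigma> (c - w)) \<le> of_int N * CB" unfolding cw by (rule z(2))
    thus ?thesis using cR cs by blast
  qed
  moreover have "of_int N * CB \<ge> 0" using N CB by simp
  ultimately show ?thesis by blast
qed

end

definition SE :: "(nat \<Rightarrow> real) \<Rightarrow> bool" where
  "SE u \<longleftrightarrow> (\<forall>\<epsilon>>0. \<exists>C. \<forall>n. u n \<le> C * (1 + \<epsilon>) ^ n)"

lemma SE_limsup:
  assumes nn: "\<And>n. 0 \<le> u n" and ls: "limsup (\<lambda>n. ereal (root n (u n))) \<le> 1"
  shows "SE u"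
  unfolding SE_def
proof (intro allI impI)
  fix \<epsilon> :: real assume e: "\<epsilon> > 0"
  have "(1::ereal) < ereal (1 + \<epsilon>)" using e by (simp add: one_ereal_def)
  hence "limsup (\<lambda>n. ereal (root n (u n))) < ereal (1 + \<epsilon>)" using ls by (rule le_less_trans[rotated])
  from Limsup_lessD[OF this] obtain N where N: "\<And>n. n \<ge> N \<Longrightarrow> root n (u n) < 1 + \<epsilon>"
    by (auto simp: eventually_sequentially)
  define C where "C = 1 + (\<Sum>n\<le>N. u n)"
  have "u n \<le> C * (1 + \<epsilon>) ^ n" for n
  proof (cases "n \<le> N")
    case True
    have "u n \<le> (\<Sum>n\<le>N. u n)" using True nn by (intro member_le_sum) auto
    also have "\<dots> \<le> C" by (simp add: C_def)
    also have "\<dots> \<le> C * (1 + \<epsilon>) ^ n"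
    proof -
      have "C \<ge> 0" unfolding C_def using nn by (simp add: sum_nonneg add_nonneg_nonneg)
      moreover have "1 \<le> (1 + \<epsilon>) ^ n" using e by (simp add: one_le_power)
      ultimately show ?thesis by (metis mult.right_neutral mult_left_mono)
    qed
    finally show ?thesis .
  next
    case False
    hence n: "n > 0" "n \<ge> N" by auto
    have "u n = root n (u n) ^ n" using n nn by (simp add: real_root_pow_pos2)
    also have "\<dots> \<le> (1 + \<epsilon>) ^ n"
      using N[OF n(2)] nn by (intro power_mono) (auto simp: real_root_ge_zero)
    also have "\<dots> \<le> C * (1 + \<epsilon>) ^ n"
    proof -
      have "C \<ge> 1" unfolding C_def using nn by (simp add: sum_nonneg)
      thus ?thesis using e by (simp add: mult_le_cancel_right1)
    qed
    finally show ?thesis .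
  qed
  thus "\<exists>C. \<forall>n. u n \<le> C * (1 + \<epsilon>) ^ n" by blast
qed

lemma limsup_SE:
  assumes nn: "\<And>n. 0 \<le> u n" and se: "SE u"
  shows "limsup (\<lambda>n. ereal (root n (u n))) \<le> 1"
proof (rule ereal_le_epsilon2)
  fix \<epsilon> :: real assume e: "\<epsilon> > 0"
  obtain C where C: "\<And>n. u n \<le> C * (1 + \<epsilon>) ^ n" using se e unfolding SE_def by blast
  define C' where "C' = max C 0 + 1"
  have C': "C' > 0" by (simp add: C'_def)
  have "eventually (\<lambda>n. ereal (root n (u n)) \<le> ereal (root n C' * (1 + \<epsilon>))) sequentially"
    unfolding eventually_sequentially
  proof (intro exI[of _ 1] allI impI)
    fix n :: nat assume n: "n \<ge> 1"
    have "u n \<le> C' * (1 + \<epsilon>) ^ n"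
      proof -
      have "C \<le> C'" by (simp add: C'_def)
      hence "C * (1 + \<epsilon>) ^ n \<le> C' * (1 + \<epsilon>) ^ n" using e by (intro mult_right_mono) auto
      thus ?thesis using C[of n] by linarith
    qed
    hence "root n (u n) \<le> root n (C' * (1 + \<epsilon>) ^ n)" using n by (simp add: real_root_le_iff)
    also have "\<dots> = root n C' * (1 + \<epsilon>)" using n e by (simp add: real_root_mult real_root_power_cancel)
    finally show "ereal (root n (u n)) \<le> ereal (root n C' * (1 + \<epsilon>))" by simp
  qed
  hence "limsup (\<lambda>n. ereal (root n (u n))) \<le> limsup (\<lambda>n. ereal (root n C' * (1 + \<epsilon>)))"
    by (rule Limsup_mono)
  also have "limsup (\<lambda>n. ereal (root n C' * (1 + \<epsilon>))) = ereal (1 * (1 + \<epsilon>))"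
  proof -
    have "(\<lambda>n. root n C' * (1 + \<epsilon>)) \<longlonglongrightarrow> 1 * (1 + \<epsilon>)"
      by (intro tendsto_mult LIMSEQ_root_const C' tendsto_const)
    hence "(\<lambda>n. ereal (root n C' * (1 + \<epsilon>))) \<longlonglongrightarrow> ereal (1 * (1 + \<epsilon>))" by (rule tendsto_ereal)
    thus ?thesis by (intro lim_imp_Limsup) auto
  qed
  finally show "limsup (\<lambda>n. ereal (root n (u n))) \<le> 1 + ereal \<epsilon>" by (simp add: add.commute one_ereal_def)
qed

lemma SE_mono: "SE v \<Longrightarrow> (\<And>n. u n \<le> v n) \<Longrightarrow> SE u"
  unfolding SE_def by (meson order_trans)

lemma SE_const: "c \<ge> 0 \<Longrightarrow> SE (\<lambda>_. c)"
  unfolding SE_def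
  by (auto intro!: exI[of _ c] simp: mult_le_cancel_left1 one_le_power)

lemma SE_add: "SE u \<Longrightarrow> SE v \<Longrightarrow> SE (\<lambda>n. u n + v n)"
  unfolding SE_def
proof (intro allI impI)
  fix \<epsilon> :: real assume "\<forall>\<epsilon>>0. \<exists>C. \<forall>n. u n \<le> C * (1 + \<epsilon>) ^ n" "\<forall>\<epsilon>>0. \<exists>C. \<forall>n. v n \<le> C * (1 + \<epsilon>) ^ n" "\<epsilon> > 0"
  then obtain C1 C2 where "\<forall>n. u n \<le> C1 * (1 + \<epsilon>) ^ n" "\<forall>n. v n \<le> C2 * (1 + \<epsilon>) ^ n" by blast
  hence "\<forall>n. u n + v n \<le> (C1 + C2) * (1 + \<epsilon>) ^ n" by (simp add: distrib_right add_mono)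
  thus "\<exists>C. \<forall>n. u n + v n \<le> C * (1 + \<epsilon>) ^ n" by blast
qed

lemma SE_cmult: "SE u \<Longrightarrow> c \<ge> 0 \<Longrightarrow> SE (\<lambda>n. c * u n)"
  unfolding SE_def
proof (intro allI impI)
  fix \<epsilon> :: real assume "\<forall>\<epsilon>>0. \<exists>C. \<forall>n. u n \<le> C * (1 + \<epsilon>) ^ n" "\<epsilon> > 0" "c \<ge> 0"
  then obtain C1 where "\<forall>n. u n \<le> C1 * (1 + \<epsilon>) ^ n" by blast
  hence "\<forall>n. c * u n \<le> (c * C1) * (1 + \<epsilon>) ^ n" using \<open>c \<ge> 0\<close>
    by (simp add: mult.assoc mult_left_mono)
  thus "\<exists>C. \<forall>n. c * u n \<le> C * (1 + \<epsilon>) ^ n" by blast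
qed

lemma SE_psum:
  assumes nn: "\<And>n. 0 \<le> u n" and se: "SE u"
  shows "SE (\<lambda>n. \<Sum>i\<le>n. u i)"
  unfolding SE_def
proof (intro allI impI)
  fix \<epsilon> :: real assume e: "\<epsilon> > 0"
  define \<delta> where "\<delta> = sqrt (1 + \<epsilon>) - 1"
  have d: "\<delta> > 0" using e by (simp add: \<delta>_def)
  have d2: "(1 + \<delta>) ^ 2 = 1 + \<epsilon>" using e by (simp add: \<delta>_def)
  obtain C where C: "\<And>n. u n \<le> C * (1 + \<delta>) ^ n" using se d unfolding SE_def by blast
  have C0: "C \<ge> 0" using C[of 0] nn[of 0] by simp
  have "(\<Sum>i\<le>n. u i) \<le> (C * (1 + 1 / \<delta>)) * (1 + \<epsilon>) ^ n" for n
  proof -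
    have "(\<Sum>i\<le>n. u i) \<le> (\<Sum>i\<le>n. C * (1 + \<delta>) ^ n)"
    proof (intro sum_mono)
      fix i assume "i \<in> {..n}"
      hence "(1 + \<delta>) ^ i \<le> (1 + \<delta>) ^ n" using d by (intro power_increasing) auto
      thus "u i \<le> C * (1 + \<delta>) ^ n" using C[of i] C0 by (meson mult_left_mono order_trans)
    qed
    also have "\<dots> = C * ((real n + 1) * (1 + \<delta>) ^ n)" by simp
    also have "real n + 1 \<le> (1 + 1 / \<delta>) * (1 + \<delta>) ^ n"
    proof -
      have "1 + real n * \<delta> \<le> (1 + \<delta>) ^ n" using d by (intro Bernoulli_inequality) auto
      hence "(1 + 1 / \<delta>) * (1 + real n * \<delta>) \<le> (1 + 1 / \<delta>) * (1 + \<delta>) ^ n"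
        using d by (intro mult_left_mono) auto
      moreover have "(1 + 1 / \<delta>) * (1 + real n * \<delta>) = 1 + real n * \<delta> + 1 / \<delta> + real n"
        using d by (simp add: field_simps)
      moreover have "real n * \<delta> \<ge> 0" "1 / \<delta> \<ge> 0" using d by auto
      ultimately show ?thesis by linarith
    qed
    hence "C * ((real n + 1) * (1 + \<delta>) ^ n) \<le> C * ((1 + 1 / \<delta>) * (1 + \<delta>) ^ n * (1 + \<delta>) ^ n)"
      using C0 d by (intro mult_left_mono mult_right_mono) auto
    also have "\<dots> = (C * (1 + 1 / \<delta>)) * ((1 + \<delta>) ^ 2) ^ n"
      by (simp add: power_mult_distrib mult_ac flip: power_mult power2_eq_square)
    finally show ?thesis using d2 by simp
  qed
  thus "\<exists>C. \<forall>n. (\<Sum>i\<le>n. u i) \<le> C * (1 + \<epsilon>) ^ n" by blast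
qed


fun build :: "((nat \<Rightarrow> complex) \<Rightarrow> nat \<Rightarrow> complex) \<Rightarrow> complex \<Rightarrow> nat \<Rightarrow> nat \<Rightarrow> complex" where
  "build st e 0 = (\<lambda>j. if j = 0 then e else 0)"
| "build st e (Suc n) = (build st e n)(Suc n := st (build st e n) (Suc n))"

lemma build_stable: "j \<le> k \<Longrightarrow> build st e k j = build st e j j"
proof (induction k)
  case 0 thus ?case by simp
next
  case (Suc k)
  show ?case
  proof (cases "j = Suc k")
    case False thus ?thesis using Suc by simp
  qed simp
qed

definition seqb :: "((nat \<Rightarrow> complex) \<Rightarrow> nat \<Rightarrow> complex) \<Rightarrow> complex \<Rightarrow> nat \<Rightarrow> complex" where
  "seqb st e = (\<lambda>n. build st e n n)"

lemma seqb_0: "seqb st e 0 = e" by (simp add: seqb_def)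

lemma seqb_Suc:
  assumes "\<And>f f'. (\<forall>j\<le>n. f j = f' j) \<Longrightarrow> st f (Suc n) = st f' (Suc n)"
  shows "seqb st e (Suc n) = st (seqb st e) (Suc n)"
proof -
  have "seqb st e (Suc n) = st (build st e n) (Suc n)" by (simp add: seqb_def)
  also have "\<dots> = st (seqb st e) (Suc n)"
    by (rule assms) (unfold seqb_def, use build_stable in blast)
  finally show ?thesis .
qed

lemma house_0: "number_field K \<Longrightarrow> house K 0 = 0"
proof -
  assume nf: "number_field K"
  have "house K 0 \<le> 0" by (rule house_le[OF nf]) (simp add: s0[OF nf])
  thus ?thesis using house_nonneg[OF nf, of 0] by simp
qed

lemma conv_fps_intro:
  assumes nf: "number_field K" and "\<And>n. fps_nth f n \<in> S" and "SE (\<lambda>n. house K (fps_nth f n))"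
  shows "f \<in> conv_fps K S"
proof -
  have "limsup (\<lambda>n. ereal (root n (house K (fps_nth f n)))) \<le> 1"
    by (rule limsup_SE[OF house_nonneg[OF nf] assms(3)])
  moreover have "f \<in> fps_over S" unfolding fps_over_def using assms(2) by blast
  ultimately show ?thesis unfolding conv_fps_def by blast
qed

lemma conv_fps_SE:
  assumes nf: "number_field K" and "f \<in> conv_fps K S"
  shows "SE (\<lambda>n. house K (fps_nth f n))"
proof -
  have "limsup (\<lambda>n. ereal (root n (house K (fps_nth f n)))) \<le> 1"
    using assms(2) unfolding conv_fps_def by blast
  thus ?thesis by (rule SE_limsup[OF house_nonneg[OF nf]])
qed

lemma main_constr:
  fixes K :: "complex set" and a :: complex and g :: "complex fps" and conv :: bool
  defines "R \<equiv> ring_of_integers K"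
  defines "Ra \<equiv> invert_elem (ring_of_integers K) a"
  assumes nf: "number_field K" and aR: "a \<in> R" and a0: "a \<noteq> 0"
    and gRa: "\<And>n. fps_nth g n \<in> Ra" and g0: "g \<noteq> 0"
    and gse: "conv \<Longrightarrow> SE (\<lambda>n. house K (fps_nth g n))"
  shows "\<exists>h. h \<noteq> 0 \<and> (\<forall>n. fps_nth h n \<in> Ra) \<and> (conv \<longrightarrow> SE (\<lambda>n. house K (fps_nth h n))) \<and>
             (\<forall>n. fps_nth (g * h) n \<in> R) \<and> SE (\<lambda>n. house K (fps_nth (g * h) n))"
proof -
  note aR' = aR[unfolded R_def] 
  define m where "m = subdegree g"
  define b where "b = fps_nth g m"
  have b0: "b \<noteq> 0" using g0 by (simp add: b_def m_def)
  have bRa: "b \<in> Ra" using gRa by (simp add: b_def)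
  have bK: "b \<in> K" using RaK[OF nf aR' a0] bRa by (simp add: Ra_def)
  have gK: "fps_nth g i \<in> K" for i using RaK[OF nf aR' a0] gRa by (simp add: Ra_def)
  obtain C0 where C0: "C0 \<ge> 0" and spec0: "\<And>s w. s \<in> Ra \<Longrightarrow> w \<in> K \<Longrightarrow> \<exists>c\<in>R.
           (c - s) / b \<in> Ra \<and> (\<forall>\<sigma>\<in>embeddings K. cmod (\<sigma> (c - w)) \<le> C0)"
    using main_arith[OF nf aR' a0 bRa[unfolded Ra_def] b0] unfolding R_def Ra_def by blast
  obtain rb j where rb: "rb \<in> R" "b = rb / a ^ j"
    using bRa unfolding Ra_def Ra_iff[OF nf aR' a0] R_def by blast
  define e where "e = a ^ j"
  have be: "b * e = rb" using a0 by (simp add: rb(2) e_def)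
  have e0: "e \<noteq> 0" using a0 by (simp add: e_def)
  have eR: "e \<in> R" unfolding e_def R_def by (rule Rpow[OF nf aR'])
  have eRa: "e \<in> Ra" using RRa[OF nf aR' a0] eR by (simp add: R_def Ra_def)
  define W where "W = (\<lambda>s::complex. if conv then s else 0)"
  define cf where "cf = (\<lambda>s. SOME c. c \<in> R \<and> (c - s) / b \<in> Ra \<and>
       (\<forall>\<sigma>\<in>embeddings K. cmod (\<sigma> (c - W s)) \<le> C0))"
  have cf: "cf s \<in> R \<and> (cf s - s) / b \<in> Ra \<and> (\<forall>\<sigma>\<in>embeddings K. cmod (\<sigma> (cf s - W s)) \<le> C0)"
    if "s \<in> Ra" for s
  proof -
    have "W s \<in> K" using RaK[OF nf aR' a0] that K0[OF nf] by (auto simp: W_def Ra_def)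
    from spec0[OF that this] have "\<exists>c. c \<in> R \<and> (c - s) / b \<in> Ra \<and>
       (\<forall>\<sigma>\<in>embeddings K. cmod (\<sigma> (c - W s)) \<le> C0)" by blast
    thus ?thesis unfolding cf_def by (rule someI_ex)
  qed
  define S where "S = (\<lambda>f n. \<Sum>i\<in>{Suc m..m + n}. fps_nth g i * f (m + n - i))"
  define st where "st = (\<lambda>f n. (cf (S f n) - S f n) / b)"
  define hs where "hs = seqb st e"
  have hs0: "hs 0 = e" by (simp add: hs_def seqb_0)
  have hsS: "hs (Suc n) = st hs (Suc n)" for n
    unfolding hs_def
  proof (rule seqb_Suc)
    fix f f' :: "nat \<Rightarrow> complex" assume ff: "\<forall>j\<le>n. f j = f' j"
    have "S f (Suc n) = S f' (Suc n)" unfolding S_def using ff by (intro sum.cong refl) auto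
    thus "st f (Suc n) = st f' (Suc n)" by (simp add: st_def)
  qed
  have SRa: "S hs n \<in> Ra" if "\<forall>j<n. hs j \<in> Ra" for n
    unfolding S_def using that gRa
    by (intro Ra_sum[OF nf aR' a0, folded Ra_def] Ra_mult[OF nf aR' a0, folded Ra_def]) auto
  have hsRa: "\<forall>j\<le>n. hs j \<in> Ra" for n
  proof (induction n)
    case 0 thus ?case using hs0 eRa by simp
  next
    case (Suc n)
    have "S hs (Suc n) \<in> Ra" using Suc by (intro SRa) auto
    hence "hs (Suc n) \<in> Ra" using cf by (simp add: hsS st_def)
    thus ?case using Suc le_Suc_eq by auto
  qed
  hence hsRa': "hs n \<in> Ra" for n by blast
  have hsK: "hs n \<in> K" for n using RaK[OF nf aR' a0] hsRa' by (simp add: Ra_def)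
  have SRa': "S hs n \<in> Ra" for n using SRa hsRa' by blast
  have SK: "S hs n \<in> K" for n using RaK[OF nf aR' a0] SRa' by (simp add: Ra_def)
  define h where "h = Abs_fps hs"
  have hn: "fps_nth h n = hs n" for n unfolding h_def by (rule fps_nth_Abs_fps)
  have ghlow: "fps_nth (g * h) k = 0" if "k < m" for k
    unfolding fps_mult_nth
  proof (intro sum.neutral ballI)
    fix i assume "i \<in> {0..k}"
    hence "i < subdegree g" using that unfolding m_def by simp
    hence "fps_nth g i = 0" by (rule nth_less_subdegree_zero)
    thus "fps_nth g i * fps_nth h (k - i) = 0" by simp
  qed
  have ghm: "fps_nth (g * h) (m + n) = b * hs n + S hs n" for n
  proof -
    have "fps_nth (g * h) (m + n) = (\<Sum>i=0..m + n. fps_nth g i * hs (m + n - i))" by (simp add: fps_mult_nth hn)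
    also have "{0..m + n} = {0..<m} \<union> insert m {Suc m..m + n}" by auto
    also have "(\<Sum>i\<in>{0..<m} \<union> insert m {Suc m..m + n}. fps_nth g i * hs (m + n - i)) =
        (\<Sum>i\<in>{0..<m}. fps_nth g i * hs (m + n - i)) + (\<Sum>i\<in>insert m {Suc m..m + n}. fps_nth g i * hs (m + n - i))"
      by (rule sum.union_disjoint) auto
    also have "(\<Sum>i\<in>insert m {Suc m..m + n}. fps_nth g i * hs (m + n - i)) = fps_nth g m * hs n + S hs n"
    proof -
      have "(\<Sum>i\<in>insert m {Suc m..m + n}. fps_nth g i * hs (m + n - i)) =
            fps_nth g m * hs (m + n - m) + (\<Sum>i\<in>{Suc m..m + n}. fps_nth g i * hs (m + n - i))"
        by (rule sum.insert) auto
      thus ?thesis by (simp add: S_def)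
    qed
    also have "(\<Sum>i\<in>{0..<m}. fps_nth g i * hs (m + n - i)) = 0"
    proof (intro sum.neutral ballI)
      fix i assume "i \<in> {0..<m}"
      hence "i < subdegree g" unfolding m_def by simp
      hence "fps_nth g i = 0" by (rule nth_less_subdegree_zero)
      thus "fps_nth g i * hs (m + n - i) = 0" by simp
    qed
    finally show ?thesis by (simp add: b_def)
  qed
  have ghSuc: "fps_nth (g * h) (m + Suc n) = cf (S hs (Suc n))" for n
    using ghm[of "Suc n"] b0 by (simp add: hsS st_def)
  have ghm0: "fps_nth (g * h) m = rb"
  proof -
    have "S hs 0 = 0" unfolding S_def by simp
    thus ?thesis using ghm[of 0] be hs0 by simp
  qed
  have ghR: "fps_nth (g * h) k \<in> R" for k
  proof (cases "k < m")
    case True thus ?thesis using ghlow R0[OF nf] by (simp add: R_def)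
  next
    case False
    then obtain n where k: "k = m + n" by (metis le_add_diff_inverse not_less)
    show ?thesis
    proof (cases n)
      case 0 thus ?thesis using k ghm0 rb by simp
    next
      case (Suc n') thus ?thesis using k ghSuc cf[OF SRa'] by simp
    qed
  qed
  define G where "G = (\<lambda>k. \<Sum>i\<le>k. house K (fps_nth g i))"
  define C1 where "C1 = house K (1 / b) * C0 + house K e"
  have C1: "C1 \<ge> 0" unfolding C1_def using house_nonneg[OF nf] C0 by simp
  have hsb: "cmod (\<sigma> (hs n)) \<le> C1" if conv and sig: "\<sigma> \<in> embeddings K" for n \<sigma>
  proof (cases n)
    case 0
    have "cmod (\<sigma> (hs n)) \<le> house K e" using house_ge[OF nf sig] 0 hs0 by simp
    also have "\<dots> \<le> C1" unfolding C1_def using house_nonneg[OF nf] C0 by simp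
    finally show ?thesis .
  next
    case (Suc n')
    define s where "s = S hs n"
    have sK: "s \<in> K" by (simp add: s_def SK)
    have cfK: "cf s \<in> K" using cf[OF SRa'] RK[OF nf] by (simp add: s_def R_def)
    have "hs n = (1 / b) * (cf s - s)" using Suc by (simp add: hsS st_def s_def)
    hence "\<sigma> (hs n) = \<sigma> (1 / b) * \<sigma> (cf s - s)"
      using smult[OF nf sig Kdiv[OF nf K1[OF nf] bK] Kdiff[OF nf cfK sK]] by simp
    hence "cmod (\<sigma> (hs n)) = cmod (\<sigma> (1 / b)) * cmod (\<sigma> (cf s - s))" by (simp add: norm_mult)
    also have "\<dots> \<le> house K (1 / b) * C0"
    proof (intro mult_mono)
      show "cmod (\<sigma> (1 / b)) \<le> house K (1 / b)" by (rule house_ge[OF nf sig])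
      show "cmod (\<sigma> (cf s - s)) \<le> C0" using cf[OF SRa'] sig \<open>conv\<close> by (simp add: s_def W_def)
    qed (use house_nonneg[OF nf] in auto)
    also have "\<dots> \<le> C1" unfolding C1_def using house_nonneg[OF nf] by simp
    finally show ?thesis .
  qed
  have Sb: "cmod (\<sigma> (S hs n)) \<le> C1 * G (m + n)" if conv and sig: "\<sigma> \<in> embeddings K" for n \<sigma>
  proof -
    have "\<sigma> (S hs n) = (\<Sum>i\<in>{Suc m..m + n}. \<sigma> (fps_nth g i) * \<sigma> (hs (m + n - i)))"
      unfolding S_def using gK hsK
      by (subst ssum[OF nf sig]) (auto intro!: Kmult[OF nf] sum.cong simp: smult[OF nf sig])
    hence "cmod (\<sigma> (S hs n)) \<le> (\<Sum>i\<in>{Suc m..m + n}. cmod (\<sigma> (fps_nth g i)) * cmod (\<sigma> (hs (m + n - i))))"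
      by (simp add: norm_sum norm_mult order_trans[OF norm_sum])
    also have "\<dots> \<le> (\<Sum>i\<in>{Suc m..m + n}. house K (fps_nth g i) * C1)"
      using house_ge[OF nf sig] hsb[OF \<open>conv\<close> sig]
      by (intro sum_mono mult_mono) (auto intro: house_nonneg[OF nf])
    also have "\<dots> \<le> (\<Sum>i\<le>m + n. house K (fps_nth g i) * C1)"
      using C1 house_nonneg[OF nf] by (intro sum_mono2) auto
    also have "\<dots> = C1 * G (m + n)" by (simp add: G_def sum_distrib_left mult_ac)
    finally show ?thesis .
  qed
  define T where "T = (\<lambda>k. C0 + house K rb + (if conv then C1 * G k else 0))"
  have ghb: "house K (fps_nth (g * h) k) \<le> T k" for k
  proof (rule house_le[OF nf])
    fix \<sigma> assume sig: "\<sigma> \<in> embeddings K"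
    have T0: "T k \<ge> 0" unfolding T_def G_def
      using C0 C1 house_nonneg[OF nf] by (auto intro!: add_nonneg_nonneg mult_nonneg_nonneg sum_nonneg)
    show "cmod (\<sigma> (fps_nth (g * h) k)) \<le> T k"
    proof (cases "k < m")
      case True thus ?thesis using ghlow T0 s0[OF nf sig] by simp
    next
      case False
      then obtain n where k: "k = m + n" by (metis le_add_diff_inverse not_less)
      show ?thesis
      proof (cases n)
        case 0
        have "cmod (\<sigma> (fps_nth (g * h) k)) \<le> house K rb" using k 0 ghm0 house_ge[OF nf sig] by simp
        also have "\<dots> \<le> T k" unfolding T_def G_def
          using C0 C1 house_nonneg[OF nf] by (auto intro!: add_nonneg_nonneg mult_nonneg_nonneg sum_nonneg)
        finally show ?thesis .
      next
        case (Suc n')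
        define s where "s = S hs n"
        have sK: "s \<in> K" by (simp add: s_def SK)
        have cfR: "cf s \<in> R" "\<forall>\<sigma>\<in>embeddings K. cmod (\<sigma> (cf s - W s)) \<le> C0"
          using cf[OF SRa'] by (auto simp: s_def)
        have cfK: "cf s \<in> K" using cfR RK[OF nf] by (simp add: R_def)
        have WK: "W s \<in> K" using sK K0[OF nf] by (simp add: W_def)
        have gh: "fps_nth (g * h) k = cf s" using k Suc ghSuc by (simp add: s_def)
        have "\<sigma> (cf s) = \<sigma> (cf s - W s) + \<sigma> (W s)"
          using sdiff[OF nf sig cfK WK] by simp
        hence "cmod (\<sigma> (cf s)) \<le> cmod (\<sigma> (cf s - W s)) + cmod (\<sigma> (W s))"
          by (metis norm_triangle_ineq)
        also have "\<dots> \<le> C0 + (if conv then C1 * G k else 0)"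
        proof (intro add_mono)
          show "cmod (\<sigma> (cf s - W s)) \<le> C0" using cfR sig by blast
          show "cmod (\<sigma> (W s)) \<le> (if conv then C1 * G k else 0)"
            using Sb[OF _ sig, of n] k by (auto simp: W_def s_def s0[OF nf sig])
        qed
        also have "\<dots> \<le> T k" unfolding T_def using house_nonneg[OF nf] by simp
        finally show ?thesis using gh by simp
      qed
    qed
  qed
  have SET: "SE T"
  proof (cases conv)
    case True
    have "SE G" unfolding G_def by (intro SE_psum gse[OF True] house_nonneg[OF nf])
    hence "SE (\<lambda>k. (C0 + house K rb) + C1 * G k)"
      using C0 C1 house_nonneg[OF nf] by (intro SE_add SE_const SE_cmult) auto
    thus ?thesis using True by (simp add: T_def add.assoc)
  next
    case False
    thus ?thesis unfolding T_def using C0 house_nonneg[OF nf] by (simp add: SE_const)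
  qed
  have "h \<noteq> 0" proof assume "h = 0" hence "fps_nth h 0 = 0" by simp thus False using hn hs0 e0 by simp qed
  moreover have "\<forall>n. fps_nth h n \<in> Ra" using hsRa' hn by simp
  moreover have "conv \<longrightarrow> SE (\<lambda>n. house K (fps_nth h n))"
  proof
    assume conv
    have "house K (fps_nth h n) \<le> C1" for n
      using hsb[OF \<open>conv\<close>] hn by (intro house_le[OF nf]) auto
    thus "SE (\<lambda>n. house K (fps_nth h n))" using SE_const[OF C1] by (rule SE_mono[rotated]) 
  qed
  moreover have "\<forall>n. fps_nth (g * h) n \<in> R" using ghR by blast
  moreover have "SE (\<lambda>n. house K (fps_nth (g * h) n))" using SET ghb by (rule SE_mono)
  ultimately show ?thesis by blast
qed

theorem corollary2p9:
  fixes K :: "complex set" and a :: complex and D :: "complex fps set"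
  assumes "number_field K"
    and "a \<in> ring_of_integers K" and "a \<noteq> 0"
    and "D = conv_fps K (invert_elem (ring_of_integers K) a)
         \<or> D = fps_over (invert_elem (ring_of_integers K) a)"
  shows "\<forall>g\<in>D. \<exists>h\<in>D. h \<noteq> 0 \<and> g * h \<in> conv_fps K (ring_of_integers K)"
proof
  note nf = assms(1) and aR = assms(2) and a0 = assms(3)
  fix g assume gD: "g \<in> D"
  define conv where "conv = (D = conv_fps K (invert_elem (ring_of_integers K) a))"
  have gRa: "fps_nth g n \<in> invert_elem (ring_of_integers K) a" for n
    using gD assms(4) by (auto simp: conv_fps_def fps_over_def)
  have Dchar: "D = (if conv then conv_fps K (invert_elem (ring_of_integers K) a)
                    else fps_over (invert_elem (ring_of_integers K) a))"
    using assms(4) by (auto simp: conv_def)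
  show "\<exists>h\<in>D. h \<noteq> 0 \<and> g * h \<in> conv_fps K (ring_of_integers K)"
  proof (cases "g = 0")
    case True
    have one: "fps_nth (1 :: complex fps) n \<in> invert_elem (ring_of_integers K) a" for n
      using RRa[OF nf aR a0] R0[OF nf] R1[OF nf] by (cases "n = 0") auto
    have "house K (fps_nth (1 :: complex fps) n) \<le> 1" for n
      by (rule house_le[OF nf]) (auto simp: s0[OF nf] s1[OF nf])
    hence se1: "SE (\<lambda>n. house K (fps_nth (1 :: complex fps) n))"
      by (intro SE_mono[OF SE_const[of 1]]) auto
    have "1 \<in> D"
      unfolding Dchar using one se1 by (auto simp: fps_over_def intro!: conv_fps_intro[OF nf])
    moreover have "g * 1 \<in> conv_fps K (ring_of_integers K)"
      using True R0[OF nf] house_0[OF nf] by (auto intro!: conv_fps_intro[OF nf] SE_const)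
    ultimately show ?thesis by (intro bexI[of _ 1]) auto
  next
    case False
    have gse: "SE (\<lambda>n. house K (fps_nth g n))" if conv
      using gD that by (intro conv_fps_SE[OF nf]) (simp add: conv_def)
    obtain h where h: "h \<noteq> 0" "\<forall>n. fps_nth h n \<in> invert_elem (ring_of_integers K) a"
      "conv \<longrightarrow> SE (\<lambda>n. house K (fps_nth h n))"
      "\<forall>n. fps_nth (g * h) n \<in> ring_of_integers K" "SE (\<lambda>n. house K (fps_nth (g * h) n))"
      using main_constr[OF nf aR a0 gRa False gse] by blast
    have "h \<in> D"
      unfolding Dchar using h(2,3) by (auto simp: fps_over_def intro!: conv_fps_intro[OF nf])
    moreover have "g * h \<in> conv_fps K (ring_of_integers K)"
      using h(4,5) by (intro conv_fps_intro[OF nf]) auto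
    ultimately show ?thesis using h(1) by blast
  qed
qed

end
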